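(* Let $\Theta_0 \subseteq \mathbb{R}^q$, let $\theta_0 \in \Theta_0$, and for every $\theta \in \mathbb{R}^q$ let $g_\theta : \mathcal{X} \to \mathbb{R}$ be a predictor such that $\theta \mapsto g_\theta(x)$ is twice differentiable for every $x \in \mathcal{X} \subseteq \mathbb{R}^d$. Let $\mathcal{C}_\mathrm{T} \subseteq \mathbb{R}^q$ be a convex set containing $0$ with $\sup_{\delta \in \mathcal{C}_\mathrm{T}} \|\delta\|_2 \leq R$. Let $(x_1,y_1),\dots,(x_{n_\mathrm{T}},y_{n_\mathrm{T}}) \in \mathcal{X}\times\mathcal{Y}$ be the target samples (with $\mathcal{Y}\subseteq\mathbb{R}$), and let $\ell:\mathbb{R}\times\mathcal{Y}\to\mathbb{R}$ be such that $\ell(\cdot,y)$ is convex and $1$-Lipschitz for every $y \in \mathcal{Y}$. For a predictor $h$ write $\mathcal{L}^{g^\ast}(h) = \frac{1}{n_\mathrm{T}}\sum_{i=1}^{n_\mathrm{T}} \ell(h(x_i), y_i)$ (the empirical loss on the target samples, which are labeled by a target task $g^\ast$). Assume there are $\beta, L \geq 0$ with \[ \sup_{\theta\in\Theta_0}\sup_{\delta \in \mathcal{C}_\mathrm{T}} \frac{1}{n_\mathrm{T}}\sum_{i=1}^{n_\mathrm{T}} \|\nabla_\theta^2 g_{\theta+\delta}(x_i)\|_2^2 \leq \beta^2 \quad\text{and}\quad \sup_{\theta \in \Theta_0}\frac{1}{n_\mathrm{T}}\sum_{i=1}^{n_\mathrm{T}} \|\nabla_\theta g_\theta(x_i)\|_2^2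 \leq L^2, \] where $\|\cdot\|_2$ on Hessians is the spectral norm. Run projected gradient descent for $T_\mathrm{PGD}$ iterations on $\delta \mapsto \mathcal{L}^{g^\ast}(g_{\theta_0+\delta})$ over $\mathcal{C}_\mathrm{T}$: $\delta_0 = 0$, $\delta_{s+1} = \Pi_{\mathcal{C}_\mathrm{T}}\big(\delta_s - \eta \nabla_\delta \mathcal{L}^{g^\ast}(g_{\theta_0+\delta_s})\big)$, where $\Pi_{\mathcal{C}_\mathrm{T}}$ is Euclidean projection onto $\mathcal{C}_\mathrm{T}$ and the step size is \[ \eta = \frac{1}{\sqrt{T_\mathrm{PGD}}}\left(\frac{R}{\sqrt{L^2 + \beta^2 R^2}}\right). \] Let $g_s = g_{\theta_0 + \delta_s}$ for $s = 0,\dots,T_\mathrm{PGD}$ (so $g_0 = g_{\theta_0}$). Then for every $g \in \{g_{\theta_0+\delta} : \delta \in \mathcal{C}_\mathrm{T}\}$, \[ \min_{s}\mathcal{L}^{g^\ast}(g_s) - \mathcal{L}^{g^\ast}(g) \leq \beta R^2 + R\sqrt{\frac{L^2 + \beta^2R^2}{T_\mathrm{PGD}}}. \]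
   Context: This is the optimization (fine-tuning) step of a meta-learning procedure: a representation/initialization $\theta_0$ has been learned from source tasks, and at target time one fine-tunes by searching for a perturbation $\delta$ in the feasible set $\mathcal{C}_\mathrm{T}$ using projected gradient descent on the empirical target loss. *)

theory Defs
  imports "HOL-Analysis.Analysis"
begin

definition emp_loss ::
  "(real \<Rightarrow> real \<Rightarrow> real) \<Rightarrow> nat \<Rightarrow> (nat \<Rightarrow> 'x) \<Rightarrow> (nat \<Rightarrow> real) \<Rightarrow> ('x \<Rightarrow> real) \<Rightarrow> real"
  where "emp_loss loss n xs ys h = (1 / real n) * (\<Sum>i<n. loss (h (xs i)) (ys i))"

definition is_projection :: "('a::real_normed_vector) set \<Rightarrow> ('a \<Rightarrow> 'a) \<Rightarrow> bool"
  where "is_projection C P \<longleftrightarrow> (\<forall>v. P v \<in> C \<and> (\<forall>c\<in>C. dist v (P v) \<le> dist v c))"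

primrec pgd :: "('a::real_vector \<Rightarrow> 'a) \<Rightarrow> real \<Rightarrow> ('a \<Rightarrow> 'a) \<Rightarrow> nat \<Rightarrow> 'a"
  where "pgd P eta grad 0 = 0"
  | "pgd P eta grad (Suc s) = P (pgd P eta grad s - eta *\<^sub>R grad (pgd P eta grad s))"

text \<open>(Sub)gradient w.r.t. delta of delta \<mapsto> emp_loss (g (theta0 + delta)), via the chain rule,
  with dloss z y a (sub)derivative of loss(., y) at z and Dg theta x the gradient of theta \<mapsto> g theta x.\<close>
definition emp_grad ::
  "(real \<Rightarrow> real \<Rightarrow> real) \<Rightarrow> nat \<Rightarrow> (nat \<Rightarrow> 'x) \<Rightarrow> (nat \<Rightarrow> real) \<Rightarrow>
   ('q::real_vector \<Rightarrow> 'x \<Rightarrow> real) \<Rightarrow> ('q \<Rightarrow> 'x \<Rightarrow> 'q) \<Rightarrow> 'q \<Rightarrow> 'q \<Rightarrow> 'q"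
  where "emp_grad dloss n xs ys g Dg theta0 delta =
     (1 / real n) *\<^sub>R (\<Sum>i<n. dloss (g (theta0 + delta) (xs i)) (ys i) *\<^sub>R Dg (theta0 + delta) (xs i))"

end

theory Submission
  imports Defs
begin


lemma avg_abs_le:
  fixes a :: "nat \<Rightarrow> real"
  assumes n: "n > 0" and B: "B \<ge> 0" and h: "(1 / real n) * (\<Sum>i<n. (a i)\<^sup>2) \<le> B\<^sup>2"
  shows "(1 / real n) * (\<Sum>i<n. \<bar>a i\<bar>) \<le> B"
proof -
  have "(\<Sum>i<n. \<bar>a i\<bar>)\<^sup>2 \<le> (\<Sum>i<n. (\<bar>a i\<bar>)\<^sup>2) * real n"
    using sum_squared_le_sum_of_squares[of "\<lambda>i. \<bar>a i\<bar>" "{..<n}"] by simp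
  also have "\<dots> = (\<Sum>i<n. (a i)\<^sup>2) * real n" by simp
  also have "\<dots> \<le> (real n * B\<^sup>2) * real n"
    using h n by (simp add: field_simps)
  finally have "(\<Sum>i<n. \<bar>a i\<bar>)\<^sup>2 \<le> (real n * B)\<^sup>2" by (simp add: power2_eq_square algebra_simps)
  hence "(\<Sum>i<n. \<bar>a i\<bar>) \<le> real n * B"
    by (rule power2_le_imp_le) (use B in simp)
  thus ?thesis using n by (simp add: field_simps)
qed

lemma proj_zero:
  assumes "is_projection C P" "0 \<in> C"
  shows "P 0 = 0"
  using assms unfolding is_projection_def by (metis dist_self dist_le_zero_iff)

lemma proj_nonexp:
  fixes C :: "'a::real_inner set"
  assumes "is_projection C P" "convex C" "b \<in> C"
  shows "norm (P v - b) \<le> norm (v - b)"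
proof -
  let ?p = "P v"
  have pC: "?p \<in> C" and mn: "\<And>c. c \<in> C \<Longrightarrow> dist v ?p \<le> dist v c"
    using assms(1) unfolding is_projection_def by auto
  have key: "(v - ?p) \<bullet> (b - ?p) \<le> 0"
  proof (rule ccontr)
    assume "\<not> ?thesis"
    hence a: "(v - ?p) \<bullet> (b - ?p) > 0" by simp
    define c where "c = (norm (b - ?p))\<^sup>2"
    have cpos: "c > 0" using a unfolding c_def
      by (metis inner_zero_right norm_eq_zero power2_less_eq_zero_iff not_le right_minus_eq less_irrefl order_le_less)
    define t where "t = min 1 (((v - ?p) \<bullet> (b - ?p)) / c)"
    have t0: "t > 0" using a cpos unfolding t_def by simp
    have t1: "t \<le> 1" unfolding t_def by simp
    have tc: "t * c \<le> (v - ?p) \<bullet> (b - ?p)" using cpos unfolding t_def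
      by (metis min.cobounded2 mult.commute pos_le_divide_eq)
    have inC: "?p + t *\<^sub>R (b - ?p) \<in> C"
    proof -
      have "?p + t *\<^sub>R (b - ?p) = (1 - t) *\<^sub>R ?p + t *\<^sub>R b" by (simp add: algebra_simps)
      thus ?thesis using assms(2) pC assms(3) t0 t1 by (simp add: convex_def)
    qed
    have "(norm (v - ?p))\<^sup>2 \<le> (norm (v - (?p + t *\<^sub>R (b - ?p))))\<^sup>2"
      using mn[OF inC] by (simp add: dist_norm)
    also have "\<dots> = (norm (v - ?p))\<^sup>2 - 2 * t * ((v - ?p) \<bullet> (b - ?p)) + t\<^sup>2 * c"
      unfolding c_def power2_norm_eq_inner
      by (simp add: inner_diff_left inner_diff_right inner_add_left inner_add_right inner_commute algebra_simps power2_eq_square)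
    finally have "2 * t * ((v - ?p) \<bullet> (b - ?p)) \<le> t * (t * c)" by (simp add: power2_eq_square algebra_simps)
    hence "2 * ((v - ?p) \<bullet> (b - ?p)) \<le> t * c" using t0 by (simp add: mult_le_cancel_left_pos mult.assoc)
    thus False using tc a by linarith
  qed
  have "(norm (v - b))\<^sup>2 = (norm ((v - ?p) - (b - ?p)))\<^sup>2" by simp
  also have "\<dots> = (norm (v - ?p))\<^sup>2 - 2 * ((v - ?p) \<bullet> (b - ?p)) + (norm (b - ?p))\<^sup>2"
    unfolding power2_norm_eq_inner by (simp add: inner_diff_left inner_diff_right inner_commute algebra_simps)
  finally have "(norm (v - b))\<^sup>2 = (norm (v - ?p))\<^sup>2 - 2 * ((v - ?p) \<bullet> (b - ?p)) + (norm (b - ?p))\<^sup>2" .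
  moreover have "(norm (v - ?p))\<^sup>2 \<ge> 0" by simp
  ultimately have "(norm (b - ?p))\<^sup>2 \<le> (norm (v - b))\<^sup>2" using key by linarith
  hence "(norm (?p - b))\<^sup>2 \<le> (norm (v - b))\<^sup>2" by (simp add: norm_minus_commute)
  thus ?thesis by (rule power2_le_imp_le[OF _ norm_ge_zero])
qed

lemma lower_quad:
  fixes Psi :: "'a::real_inner \<Rightarrow> real" and F :: "'a \<Rightarrow> 'a"
  assumes C: "convex C" and a: "a \<in> C" and b: "b \<in> C"
    and der: "\<And>x. x \<in> C \<Longrightarrow> (Psi has_derivative (\<lambda>h. F x \<bullet> h)) (at x)"
    and lip: "\<And>x y. x \<in> C \<Longrightarrow> y \<in> C \<Longrightarrow> norm (F x - F y) \<le> beta * norm (x - y)"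
    and beta: "beta \<ge> 0"
  shows "Psi b \<ge> Psi a + F a \<bullet> (b - a) - beta / 2 * (norm (b - a))\<^sup>2"
proof -
  define d where "d = b - a"
  define phi where "phi t = Psi (a + t *\<^sub>R d) - t * (F a \<bullet> d) + beta * (norm d)\<^sup>2 * t\<^sup>2 / 2" for t
  have inC: "a + t *\<^sub>R d \<in> C" if "0 \<le> t" "t \<le> 1" for t
  proof -
    have "a + t *\<^sub>R d = (1 - t) *\<^sub>R a + t *\<^sub>R b" by (simp add: d_def algebra_simps)
    thus ?thesis using C a b that by (simp add: convex_def)
  qed
  have "phi 0 \<le> phi 1"
  proof (rule DERIV_nonneg_imp_nondecreasing[of 0 1])
    fix t :: real assume t: "0 \<le> t" "t \<le> 1"
    let ?x = "a + t *\<^sub>R d"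
    have d1: "((\<lambda>t. a + t *\<^sub>R d) has_derivative (\<lambda>s. s *\<^sub>R d)) (at t)"
      by (auto intro!: derivative_eq_intros)
    have d2: "((\<lambda>t. Psi (a + t *\<^sub>R d)) has_derivative (\<lambda>s. F ?x \<bullet> (s *\<^sub>R d))) (at t)"
      using has_derivative_compose[OF d1 der[OF inC[OF t]]] by simp
    have d3: "((\<lambda>t. Psi (a + t *\<^sub>R d)) has_real_derivative (F ?x \<bullet> d)) (at t)"
    proof -
      have e: "(\<lambda>s. F ?x \<bullet> (s *\<^sub>R d)) = (*) (F ?x \<bullet> d)" by (rule ext) simp
      show ?thesis unfolding has_field_derivative_def using d2 unfolding e .
    qed
    have "(phi has_real_derivative (F ?x \<bullet> d - F a \<bullet> d + beta * (norm d)\<^sup>2 * t)) (at t)"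
    proof -
      have e1: "((\<lambda>t. t * (F a \<bullet> d)) has_real_derivative (F a \<bullet> d)) (at t)"
        using DERIV_cmult_right[OF DERIV_ident, where c="F a \<bullet> d"] by simp
      have e2: "((\<lambda>t. beta * (norm d)\<^sup>2 * t\<^sup>2 / 2) has_real_derivative beta * (norm d)\<^sup>2 * t) (at t)"
      proof -
        have p: "((\<lambda>t. t ^ 2) has_real_derivative real 2 * t ^ (2 - Suc 0)) (at t)" by (rule DERIV_pow)
        have "((\<lambda>t. beta * (norm d)\<^sup>2 * t ^ 2 / 2) has_real_derivative beta * (norm d)\<^sup>2 * (real 2 * t ^ (2 - Suc 0)) / 2) (at t)"
          by (rule DERIV_cdivide[OF DERIV_cmult[OF p]])
        thus ?thesis by (simp add: mult.assoc)
      qed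
      have "((\<lambda>t. Psi (a + t *\<^sub>R d) - t * (F a \<bullet> d) + beta * (norm d)\<^sup>2 * t\<^sup>2 / 2) has_real_derivative
         (F ?x \<bullet> d - F a \<bullet> d + beta * (norm d)\<^sup>2 * t)) (at t)"
        by (intro DERIV_add DERIV_diff d3 e1 e2)
      moreover have "phi = (\<lambda>t. Psi (a + t *\<^sub>R d) - t * (F a \<bullet> d) + beta * (norm d)\<^sup>2 * t\<^sup>2 / 2)"
        by (rule ext) (simp add: phi_def)
      ultimately show ?thesis by simp
    qed
    moreover have "F ?x \<bullet> d - F a \<bullet> d + beta * (norm d)\<^sup>2 * t \<ge> 0"
    proof -
      have "\<bar>(F ?x - F a) \<bullet> d\<bar> \<le> norm (F ?x - F a) * norm d" by (rule Cauchy_Schwarz_ineq2)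
      also have "\<dots> \<le> beta * norm (?x - a) * norm d"
        using lip[OF inC[OF t] a] by (simp add: mult_right_mono)
      also have "\<dots> = beta * (norm d)\<^sup>2 * t" using t by (simp add: power2_eq_square)
      finally show ?thesis by (simp add: inner_diff_left)
    qed
    ultimately show "\<exists>y. (phi has_real_derivative y) (at t) \<and> 0 \<le> y" by blast
  qed simp
  thus ?thesis unfolding phi_def d_def by (simp add: algebra_simps)
qed

theorem mainTheorem1:
  fixes g :: "real^'q \<Rightarrow> real^'d \<Rightarrow> real"
    and Dg :: "real^'q \<Rightarrow> real^'d \<Rightarrow> real^'q"
    and Hg :: "real^'q \<Rightarrow> real^'d \<Rightarrow> real^'q^'q"
    and X :: "(real^'d) set" and Y :: "real set"
    and Theta0 :: "(real^'q) set" and theta0 :: "real^'q"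
    and C :: "(real^'q) set" and R :: real
    and P :: "real^'q \<Rightarrow> real^'q"
    and n :: nat and xs :: "nat \<Rightarrow> real^'d" and ys :: "nat \<Rightarrow> real"
    and loss :: "real \<Rightarrow> real \<Rightarrow> real" and dloss :: "real \<Rightarrow> real \<Rightarrow> real"
    and beta L :: real and T :: nat
  assumes theta0_in: "theta0 \<in> Theta0"
    and grad_g: "\<And>theta x. x \<in> X \<Longrightarrow> ((\<lambda>t. g t x) has_derivative (\<lambda>h. Dg theta x \<bullet> h)) (at theta)"
    and hess_g: "\<And>theta x. x \<in> X \<Longrightarrow> ((\<lambda>t. Dg t x) has_derivative (\<lambda>h. Hg theta x *v h)) (at theta)"
    and C_convex: "convex C" and C_zero: "0 \<in> C"
    and C_bounded: "\<And>delta. delta \<in> C \<Longrightarrow> norm delta \<le> R"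
    and P_proj: "is_projection C P"
    and n_pos: "n > 0"
    and samples: "\<And>i. i < n \<Longrightarrow> xs i \<in> X \<and> ys i \<in> Y"
    and loss_convex: "\<And>y. y \<in> Y \<Longrightarrow> convex_on UNIV (\<lambda>z. loss z y)"
    and loss_lipschitz: "\<And>y z z'. y \<in> Y \<Longrightarrow> \<bar>loss z y - loss z' y\<bar> \<le> \<bar>z - z'\<bar>"
    and dloss_subgrad: "\<And>y z w. y \<in> Y \<Longrightarrow> loss w y \<ge> loss z y + dloss z y * (w - z)"
    and beta_nonneg: "beta \<ge> 0" and L_nonneg: "L \<ge> 0"
    and hess_bound: "\<And>theta delta. theta \<in> Theta0 \<Longrightarrow> delta \<in> C \<Longrightarrow>
        (1 / real n) * (\<Sum>i<n. (onorm (\<lambda>h. Hg (theta + delta) (xs i) *v h))\<^sup>2) \<le> beta\<^sup>2"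
    and grad_bound: "\<And>theta. theta \<in> Theta0 \<Longrightarrow>
        (1 / real n) * (\<Sum>i<n. (norm (Dg theta (xs i)))\<^sup>2) \<le> L\<^sup>2"
    and T_pos: "T > 0"
  shows "\<forall>delta\<in>C.
     Min ((\<lambda>s. emp_loss loss n xs ys
              (g (theta0 + pgd P (1 / sqrt (real T) * (R / sqrt (L\<^sup>2 + beta\<^sup>2 * R\<^sup>2)))
                                  (emp_grad dloss n xs ys g Dg theta0) s))) ` {0..T})
       - emp_loss loss n xs ys (g (theta0 + delta))
     \<le> beta * R\<^sup>2 + R * sqrt ((L\<^sup>2 + beta\<^sup>2 * R\<^sup>2) / real T)"
proof
  fix b assume bC: "b \<in> C"
  define M where "M = sqrt (L\<^sup>2 + beta\<^sup>2 * R\<^sup>2)"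
  define eta where "eta = 1 / sqrt (real T) * (R / M)"
  define Gr where "Gr = emp_grad dloss n xs ys g Dg theta0"
  define dl where "dl s = pgd P eta Gr s" for s
  define f where "f a = emp_loss loss n xs ys (g (theta0 + a))" for a
  define W where "W a i = dloss (g (theta0 + a) (xs i)) (ys i)" for a i
  define Fw where "Fw w a = (1 / real n) *\<^sub>R (\<Sum>i<n. w i *\<^sub>R Dg (theta0 + a) (xs i))" for w :: "nat \<Rightarrow> real" and a
  define Psi where "Psi w a = (1 / real n) * (\<Sum>i<n. w i * g (theta0 + a) (xs i))" for w :: "nat \<Rightarrow> real" and a
  define Hd where "Hd w a h = (1 / real n) *\<^sub>R (\<Sum>i<n. w i *\<^sub>R (Hg (theta0 + a) (xs i) *v h))" for w :: "nat \<Rightarrow> real" and a h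
  have R0: "R \<ge> 0" using C_bounded[OF C_zero] by simp
  have nR: "real n > 0" using n_pos by simp
  have dlb: "\<bar>dloss z (ys i)\<bar> \<le> 1" if "i < n" for i z
  proof -
    have y: "ys i \<in> Y" using samples[OF that] by simp
    have "loss (z + 1) (ys i) \<ge> loss z (ys i) + dloss z (ys i) * 1"
      using dloss_subgrad[OF y, of z "z + 1"] by simp
    moreover have "loss (z - 1) (ys i) \<ge> loss z (ys i) + dloss z (ys i) * (- 1)"
      using dloss_subgrad[OF y, of z "z - 1"] by simp
    moreover have "\<bar>loss (z + 1) (ys i) - loss z (ys i)\<bar> \<le> 1"
      using loss_lipschitz[OF y, of "z + 1" z] by simp
    moreover have "\<bar>loss (z - 1) (ys i) - loss z (ys i)\<bar> \<le> 1"
      using loss_lipschitz[OF y, of "z - 1" z] by simp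
    ultimately show ?thesis by (simp add: abs_le_iff)
  qed
  have Wb: "\<bar>W a i\<bar> \<le> 1" if "i < n" for a i
    unfolding W_def using dlb[OF that] .
  have Hb: "(1 / real n) * (\<Sum>i<n. onorm (\<lambda>h. Hg (theta0 + a) (xs i) *v h)) \<le> beta" if "a \<in> C" for a
  proof -
    have "(1 / real n) * (\<Sum>i<n. \<bar>onorm (\<lambda>h. Hg (theta0 + a) (xs i) *v h)\<bar>) \<le> beta"
      by (rule avg_abs_le[OF n_pos beta_nonneg hess_bound[OF theta0_in that]])
    moreover have "(\<Sum>i<n. onorm (\<lambda>h. Hg (theta0 + a) (xs i) *v h)) \<le> (\<Sum>i<n. \<bar>onorm (\<lambda>h. Hg (theta0 + a) (xs i) *v h)\<bar>)"
      by (rule sum_mono) simp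
    ultimately show ?thesis using nR by (smt (verit) divide_nonneg_nonneg mult_left_mono of_nat_0_le_iff zero_le_one)
  qed
  have Gb: "(1 / real n) * (\<Sum>i<n. norm (Dg theta0 (xs i))) \<le> L"
    using avg_abs_le[OF n_pos L_nonneg grad_bound[OF theta0_in]] by simp
  have shift: "((\<lambda>a. theta0 + a) has_derivative (\<lambda>h. h)) (at a)" for a :: "real^'q"
    using has_derivative_add[OF has_derivative_const has_derivative_ident, of theta0 "at a"] by simp
  have dDg: "((\<lambda>a. Dg (theta0 + a) (xs i)) has_derivative (\<lambda>h. Hg (theta0 + a) (xs i) *v h)) (at a)"
    if "i < n" for i a
    using has_derivative_compose[OF shift hess_g[of "xs i" "theta0 + a"]] samples[OF that] by simp
  have dg: "((\<lambda>a. g (theta0 + a) (xs i)) has_derivative (\<lambda>h. Dg (theta0 + a) (xs i) \<bullet> h)) (at a)"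
    if "i < n" for i a
    using has_derivative_compose[OF shift grad_g[of "xs i" "theta0 + a"]] samples[OF that] by simp
  have dFw: "(Fw w has_derivative Hd w a) (at a)" for w a
  proof -
    have "((\<lambda>a. (1 / real n) *\<^sub>R (\<Sum>i<n. w i *\<^sub>R Dg (theta0 + a) (xs i))) has_derivative
          (\<lambda>h. (1 / real n) *\<^sub>R (\<Sum>i<n. w i *\<^sub>R (Hg (theta0 + a) (xs i) *v h)))) (at a)"
      by (intro has_derivative_scaleR_right has_derivative_sum dDg) simp
    thus ?thesis unfolding Fw_def[abs_def] Hd_def[abs_def] .
  qed
  have dPsi: "(Psi w has_derivative (\<lambda>h. Fw w a \<bullet> h)) (at a)" for w a
  proof -
    have "((\<lambda>a. (1 / real n) * (\<Sum>i<n. w i * g (theta0 + a) (xs i))) has_derivative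
          (\<lambda>h. (1 / real n) * (\<Sum>i<n. w i * (Dg (theta0 + a) (xs i) \<bullet> h)))) (at a)"
      by (intro has_derivative_mult_right has_derivative_sum dg) simp
    moreover have "(\<lambda>h. (1 / real n) * (\<Sum>i<n. w i * (Dg (theta0 + a) (xs i) \<bullet> h))) = (\<lambda>h. Fw w a \<bullet> h)"
      by (rule ext) (simp add: Fw_def inner_sum_left sum_distrib_left)
    ultimately show ?thesis unfolding Psi_def[abs_def] by simp
  qed
  have Hdb: "onorm (Hd w a) \<le> beta" if "a \<in> C" "\<And>i. i < n \<Longrightarrow> \<bar>w i\<bar> \<le> 1" for w a
  proof (rule onorm_le)
    fix h
    have "norm (Hd w a h) = (1 / real n) * norm (\<Sum>i<n. w i *\<^sub>R (Hg (theta0 + a) (xs i) *v h))"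
      unfolding Hd_def using nR by simp
    also have "\<dots> \<le> (1 / real n) * (\<Sum>i<n. norm (w i *\<^sub>R (Hg (theta0 + a) (xs i) *v h)))"
      by (intro mult_left_mono norm_sum) simp
    also have "\<dots> \<le> (1 / real n) * (\<Sum>i<n. onorm (\<lambda>h. Hg (theta0 + a) (xs i) *v h) * norm h)"
    proof (intro mult_left_mono sum_mono)
      fix i assume i: "i \<in> {..<n}"
      have "norm (w i *\<^sub>R (Hg (theta0 + a) (xs i) *v h)) = \<bar>w i\<bar> * norm (Hg (theta0 + a) (xs i) *v h)" by simp
      also have "\<dots> \<le> 1 * norm (Hg (theta0 + a) (xs i) *v h)"
        using that(2)[of i] i by (intro mult_right_mono) auto
      also have "\<dots> \<le> onorm (\<lambda>h. Hg (theta0 + a) (xs i) *v h) * norm h"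
        using onorm[OF matrix_vector_mul_bounded_linear] by simp
      finally show "norm (w i *\<^sub>R (Hg (theta0 + a) (xs i) *v h)) \<le> onorm (\<lambda>h. Hg (theta0 + a) (xs i) *v h) * norm h" .
    qed simp
    also have "\<dots> = ((1 / real n) * (\<Sum>i<n. onorm (\<lambda>h. Hg (theta0 + a) (xs i) *v h))) * norm h"
      by (simp add: sum_distrib_right)
    also have "\<dots> \<le> beta * norm h" using Hb[OF that(1)] by (intro mult_right_mono) auto
    finally show "norm (Hd w a h) \<le> beta * norm h" .
  qed
  have Fw_lip: "norm (Fw w x - Fw w y) \<le> beta * norm (x - y)"
    if "x \<in> C" "y \<in> C" "\<And>i. i < n \<Longrightarrow> \<bar>w i\<bar> \<le> 1" for w x y
  proof -
    have "norm (Fw w x - Fw w y) \<le> beta * norm (x - y)"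
      by (rule differentiable_bound[OF C_convex has_derivative_at_withinI[OF dFw] Hdb that(1,2)]) (use that(3) in auto)
    thus ?thesis .
  qed
  have Fw0: "norm (Fw w 0) \<le> L" if "\<And>i. i < n \<Longrightarrow> \<bar>w i\<bar> \<le> 1" for w
  proof -
    have "norm (Fw w 0) = (1 / real n) * norm (\<Sum>i<n. w i *\<^sub>R Dg theta0 (xs i))"
      unfolding Fw_def using nR by simp
    also have "\<dots> \<le> (1 / real n) * (\<Sum>i<n. norm (w i *\<^sub>R Dg theta0 (xs i)))"
      by (intro mult_left_mono norm_sum) simp
    also have "\<dots> \<le> (1 / real n) * (\<Sum>i<n. norm (Dg theta0 (xs i)))"
    proof (intro mult_left_mono sum_mono)
      fix i assume i: "i \<in> {..<n}"
      show "norm (w i *\<^sub>R Dg theta0 (xs i)) \<le> norm (Dg theta0 (xs i))"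
        using that[of i] i by (simp add: mult_left_le_one_le)
    qed simp
    also have "\<dots> \<le> L" by (rule Gb)
    finally show ?thesis .
  qed
  have GrFw: "Gr a = Fw (W a) a" for a
    unfolding Gr_def Fw_def W_def emp_grad_def by simp
  have Grb: "norm (Gr a) \<le> L + beta * norm a" if "a \<in> C" for a
  proof -
    have "norm (Fw (W a) a) \<le> norm (Fw (W a) 0) + norm (Fw (W a) a - Fw (W a) 0)"
      by (metis add_diff_cancel_left' norm_triangle_ineq add.commute diff_add_cancel)
    also have "\<dots> \<le> L + beta * norm (a - 0)"
      using Fw0[of "W a"] Fw_lip[OF that C_zero, of "W a"] Wb by (intro add_mono) auto
    finally show ?thesis by (simp add: GrFw)
  qed
  have fsub: "f b' - f a \<ge> Psi (W a) b' - Psi (W a) a" for a b'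
  proof -
    have "Psi (W a) b' - Psi (W a) a = (1 / real n) * (\<Sum>i<n. W a i * (g (theta0 + b') (xs i) - g (theta0 + a) (xs i)))"
      unfolding Psi_def by (simp add: algebra_simps sum_subtractf)
    also have "\<dots> \<le> (1 / real n) * (\<Sum>i<n. loss (g (theta0 + b') (xs i)) (ys i) - loss (g (theta0 + a) (xs i)) (ys i))"
    proof (intro mult_left_mono sum_mono)
      fix i assume i: "i \<in> {..<n}"
      have y: "ys i \<in> Y" using samples i by auto
      show "W a i * (g (theta0 + b') (xs i) - g (theta0 + a) (xs i)) \<le> loss (g (theta0 + b') (xs i)) (ys i) - loss (g (theta0 + a) (xs i)) (ys i)"
        using dloss_subgrad[OF y, of "g (theta0 + a) (xs i)" "g (theta0 + b') (xs i)"] unfolding W_def by simp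
    qed simp
    also have "\<dots> = f b' - f a"
      unfolding f_def emp_loss_def by (simp add: algebra_simps sum_subtractf)
    finally show ?thesis .
  qed
  have wc: "f b' \<ge> f a + Gr a \<bullet> (b' - a) - beta / 2 * (norm (b' - a))\<^sup>2" if "a \<in> C" "b' \<in> C" for a b'
  proof -
    have "Psi (W a) b' \<ge> Psi (W a) a + Fw (W a) a \<bullet> (b' - a) - beta / 2 * (norm (b' - a))\<^sup>2"
    proof (rule lower_quad[where Psi="Psi (W a)" and F="Fw (W a)", OF C_convex that(1) that(2) _ _ beta_nonneg])
      show "(Psi (W a) has_derivative (\<lambda>h. Fw (W a) x \<bullet> h)) (at x)" if "x \<in> C" for x by (rule dPsi)
      show "norm (Fw (W a) x - Fw (W a) y) \<le> beta * norm (x - y)" if "x \<in> C" "y \<in> C" for x y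
        by (rule Fw_lip[OF that]) (rule Wb)
    qed
    thus ?thesis using fsub[of a b'] by (simp add: GrFw)
  qed
  have dl0: "dl 0 = 0" unfolding dl_def by simp
  have dlS: "dl (Suc s) = P (dl s - eta *\<^sub>R Gr (dl s))" for s unfolding dl_def by simp
  have dlC: "dl s \<in> C" for s
  proof (cases s)
    case 0 thus ?thesis using dl0 C_zero by simp
  next
    case (Suc s') thus ?thesis using dlS P_proj unfolding is_projection_def by simp
  qed
  have fin: "finite ((\<lambda>s. f (dl s)) ` {0..T})" by simp
  have Min_le: "Min ((\<lambda>s. f (dl s)) ` {0..T}) \<le> f (dl s)" if "s \<le> T" for s
    using that by (intro Min_le fin) auto
  have nb: "norm b \<le> R" using C_bounded[OF bC] .
  have main: "Min ((\<lambda>s. f (dl s)) ` {0..T}) - f b \<le> beta * R\<^sup>2 + R * sqrt (M\<^sup>2 / real T)"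
  proof (cases "R = 0 \<or> M = 0")
    case True
    have LR: "L * R = 0"
    proof (cases "R = 0")
      case True thus ?thesis by simp
    next
      case False
      hence "M = 0" using \<open>R = 0 \<or> M = 0\<close> by simp
      hence z: "L\<^sup>2 + beta\<^sup>2 * R\<^sup>2 = 0" unfolding M_def by simp
      have "L\<^sup>2 \<le> L\<^sup>2 + beta\<^sup>2 * R\<^sup>2" by simp
      hence "L\<^sup>2 = 0" using z by simp
      thus ?thesis by simp
    qed
    have w0: "f b \<ge> f 0 + Gr 0 \<bullet> (b - 0) - beta / 2 * (norm (b - 0))\<^sup>2" using wc[OF C_zero bC] .
    have "\<bar>Gr 0 \<bullet> b\<bar> \<le> norm (Gr 0) * norm b" by (rule Cauchy_Schwarz_ineq2)
    also have "\<dots> \<le> L * R"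
      using Grb[OF C_zero] nb L_nonneg by (intro mult_mono) auto
    finally have g0: "Gr 0 \<bullet> b \<ge> - (L * R)" by simp
    have nb2: "(norm b)\<^sup>2 \<le> R\<^sup>2" using nb by (simp add: power_mono)
    have "Min ((\<lambda>s. f (dl s)) ` {0..T}) \<le> f 0" using Min_le[of 0] dl0 by simp
    moreover have "R * sqrt (M\<^sup>2 / real T) \<ge> 0" using R0 by simp
    moreover have "beta * (norm b)\<^sup>2 \<le> beta * R\<^sup>2" using nb2 beta_nonneg by (rule mult_left_mono)
    moreover have "beta * R\<^sup>2 \<ge> 0" using beta_nonneg by simp
    ultimately show ?thesis using w0 g0 LR by simp
  next
    case False
    have M0: "M \<ge> 0" unfolding M_def by simp
    have Rp: "R > 0" using False R0 by simp
    have Mp: "M > 0" using False M0 by simp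
    define sq where "sq = sqrt (real T)"
    have sqp: "sq > 0" unfolding sq_def using T_pos by simp
    have sq2: "sq\<^sup>2 = real T" unfolding sq_def by simp
    define eps where "eps = R * (M / sq)"
    have sqrt_eq: "sqrt (M\<^sup>2 / real T) = M / sq"
      unfolding sq_def using M0 by (simp add: real_sqrt_divide)
    have eta_eq: "eta = R / (sq * M)" unfolding eta_def sq_def by simp
    have etap: "eta > 0" unfolding eta_eq using Rp Mp sqp by simp
    have e1: "2 * eta * eps = 2 * R\<^sup>2 / real T"
      unfolding eta_eq eps_def sq2[symmetric] using Mp sqp by (simp add: field_simps power2_eq_square)
    have e2: "eta\<^sup>2 * M\<^sup>2 = R\<^sup>2 / real T"
      unfolding eta_eq sq2[symmetric] using Mp sqp by (simp add: field_simps power2_eq_square)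
    have LM: "L \<le> M"
    proof -
      have "L\<^sup>2 \<le> M\<^sup>2" unfolding M_def by simp
      thus ?thesis using M0 by (rule power2_le_imp_le)
    qed
    have e3: "eta * L \<le> R / sq"
    proof -
      have "eta * L \<le> eta * M" using LM etap by simp
      also have "\<dots> = R / sq" unfolding eta_eq using Mp by simp
      finally show ?thesis .
    qed
    show ?thesis
    proof (rule ccontr)
      assume "\<not> ?thesis"
      hence gapM: "Min ((\<lambda>s. f (dl s)) ` {0..T}) - f b > beta * R\<^sup>2 + eps"
        unfolding sqrt_eq eps_def by simp
      have gap: "f (dl s) - f b > beta * R\<^sup>2 + eps" if "s \<le> T" for s
        using gapM Min_le[OF that] by simp
      define D where "D s = (norm (dl s - b))\<^sup>2" for s
      have step: "D (Suc s) < R\<^sup>2 - real (Suc s) * R\<^sup>2 / real T"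
        if sT: "s < T" and Ds: "D s \<le> R\<^sup>2 - real s * R\<^sup>2 / real T" for s
      proof -
        define x where "x = dl s"
        define G where "G = Gr x"
        define r where "r = norm x"
        have xC: "x \<in> C" unfolding x_def by (rule dlC)
        have rR: "r \<le> R" unfolding r_def using C_bounded[OF xC] .
        have r0: "r \<ge> 0" unfolding r_def by simp
        have Dx: "D s = (norm (b - x))\<^sup>2" unfolding D_def x_def by (simp add: norm_minus_commute)
        have wcx: "f b \<ge> f x + G \<bullet> (b - x) - beta / 2 * D s"
          using wc[OF xC bC] unfolding G_def Dx .
        have gx0: "f x - f b > beta * R\<^sup>2 + eps" using gap[of s] sT unfolding x_def by simp
        have ip: "G \<bullet> (b - x) = - (G \<bullet> (x - b))" by (simp add: inner_diff_right)
        have gx: "G \<bullet> (x - b) > beta * R\<^sup>2 + eps - beta / 2 * D s"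
          using wcx gx0 ip by linarith
        have pj: "D (Suc s) \<le> (norm (x - eta *\<^sub>R G - b))\<^sup>2"
        proof -
          have "norm (dl (Suc s) - b) \<le> norm (x - eta *\<^sub>R G - b)"
            unfolding dlS x_def G_def by (rule proj_nonexp[OF P_proj C_convex bC])
          thus ?thesis unfolding D_def by (simp add: power_mono)
        qed
        have expand: "(norm (x - eta *\<^sub>R G - b))\<^sup>2 = D s - 2 * eta * (G \<bullet> (x - b)) + eta\<^sup>2 * (norm G)\<^sup>2"
        proof -
          have h1: "(norm ((x - b) - eta *\<^sub>R G))\<^sup>2 = (norm (x - b))\<^sup>2 - 2 * eta * (G \<bullet> (x - b)) + eta\<^sup>2 * (norm G)\<^sup>2"
            unfolding power2_norm_eq_inner
            by (simp add: inner_diff_left inner_diff_right inner_commute algebra_simps power2_eq_square)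
          have e: "x - eta *\<^sub>R G - b = (x - b) - eta *\<^sub>R G" by (simp add: algebra_simps)
          have h2: "(norm (x - b))\<^sup>2 = D s" unfolding D_def x_def ..
          show ?thesis unfolding e by (simp only: h1 h2)
        qed
        have Gn: "norm G \<le> L + beta * r" unfolding G_def r_def by (rule Grb[OF xC])
        have Gsq: "(norm G)\<^sup>2 \<le> M\<^sup>2 + 2 * L * beta * r"
        proof -
          have "(norm G)\<^sup>2 \<le> (L + beta * r)\<^sup>2" using Gn by (simp add: power_mono)
          also have "\<dots> = L\<^sup>2 + 2 * L * beta * r + beta\<^sup>2 * r\<^sup>2" by (simp add: power2_eq_square algebra_simps)
          also have "beta\<^sup>2 * r\<^sup>2 \<le> beta\<^sup>2 * R\<^sup>2" using rR r0 by (intro mult_left_mono power_mono) auto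
          hence "L\<^sup>2 + 2 * L * beta * r + beta\<^sup>2 * r\<^sup>2 \<le> M\<^sup>2 + 2 * L * beta * r" unfolding M_def by simp
          finally show ?thesis .
        qed
        have key: "D s + 2 * eta * L * r \<le> 2 * R\<^sup>2"
        proof (cases s)
          case 0
          hence "r = 0" unfolding r_def x_def using dl0 by simp
          moreover have "D s \<le> R\<^sup>2" using Ds \<open>s = 0\<close> by simp
          moreover have "R\<^sup>2 \<ge> 0" by simp
          ultimately show ?thesis by (metis add.right_neutral mult_zero_right mult_2 add_increasing2)
        next
          case (Suc s')
          have "real s * R\<^sup>2 / real T \<ge> 1 * R\<^sup>2 / real T"
            using Suc T_pos by (intro divide_right_mono mult_right_mono) auto
          hence D1: "D s \<le> R\<^sup>2 - R\<^sup>2 / real T" using Ds by simp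
          have "eta * L * r \<le> (R / sq) * R"
            using e3 rR r0 Rp sqp by (intro mult_mono) auto
          hence D2: "2 * eta * L * r \<le> 2 * ((R / sq) * R)" by simp
          have "0 \<le> (R - R / sq)\<^sup>2" by simp
          also have "\<dots> = R\<^sup>2 + R\<^sup>2 / real T - 2 * ((R / sq) * R)"
            unfolding sq2[symmetric] using sqp by (simp add: power2_eq_square field_simps)
          finally show ?thesis using D1 D2 by simp
        qed
        have A: "2 * eta * (G \<bullet> (x - b)) > 2 * eta * (beta * R\<^sup>2 + eps - beta / 2 * D s)"
          using gx etap by simp
        have B: "eta\<^sup>2 * (norm G)\<^sup>2 \<le> eta\<^sup>2 * (M\<^sup>2 + 2 * L * beta * r)"
          using Gsq by (intro mult_left_mono) auto
        have Cc: "eta * beta * (2 * R\<^sup>2 - D s - 2 * eta * L * r) \<ge> 0"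
          using key etap beta_nonneg by simp
        have Eq: "D s - 2 * eta * (beta * R\<^sup>2 + eps - beta / 2 * D s) + eta\<^sup>2 * (M\<^sup>2 + 2 * L * beta * r)
            = D s - 2 * eta * eps + eta\<^sup>2 * M\<^sup>2 - eta * beta * (2 * R\<^sup>2 - D s - 2 * eta * L * r)"
          by (simp add: algebra_simps power2_eq_square)
        have "D (Suc s) < D s - 2 * eta * eps + eta\<^sup>2 * M\<^sup>2 - eta * beta * (2 * R\<^sup>2 - D s - 2 * eta * L * r)"
          using pj expand A B Eq by linarith
        also have "\<dots> \<le> D s - R\<^sup>2 / real T" using e1 e2 Cc by linarith
        also have "\<dots> \<le> R\<^sup>2 - real (Suc s) * R\<^sup>2 / real T"
        proof -
          have "real (Suc s) * R\<^sup>2 / real T = R\<^sup>2 / real T + real s * R\<^sup>2 / real T"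
            by (simp add: algebra_simps add_divide_distrib)
          thus ?thesis using Ds by linarith
        qed
        finally show ?thesis .
      qed
      have inv: "s \<le> T \<Longrightarrow> D s \<le> R\<^sup>2 - real s * R\<^sup>2 / real T" for s
      proof (induction s)
        case 0
        have "D 0 = (norm b)\<^sup>2" unfolding D_def dl0 by simp
        also have "\<dots> \<le> R\<^sup>2" using nb by (simp add: power_mono)
        finally show ?case by simp
      next
        case (Suc s)
        thus ?case using step[of s] by simp
      qed
      obtain T' where T': "T = Suc T'" using T_pos by (cases T) auto
      have "D T < R\<^sup>2 - real T * R\<^sup>2 / real T"
        using step[of T'] inv[of T'] T' by simp
      hence "D T < 0" using T_pos by simp
      moreover have "D T \<ge> 0" unfolding D_def by simp
      ultimately show False by simp
    qed
  qed

  show "Min ((\<lambda>s. emp_loss loss n xs ys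
              (g (theta0 + pgd P (1 / sqrt (real T) * (R / sqrt (L\<^sup>2 + beta\<^sup>2 * R\<^sup>2)))
                                  (emp_grad dloss n xs ys g Dg theta0) s))) ` {0..T})
       - emp_loss loss n xs ys (g (theta0 + b))
     \<le> beta * R\<^sup>2 + R * sqrt ((L\<^sup>2 + beta\<^sup>2 * R\<^sup>2) / real T)"
    using main unfolding f_def dl_def eta_def Gr_def M_def by simp
qed

end
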